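(* Let $A,B:\mathbb{R}^n\to\mathbb{R}^n$ be linear operators that are GTP with respect to a totally positive structure $\{K_1,\ldots,K_n\}$. Then $AB$ is GTP with respect to $\{K_1,\ldots,K_n\}$. If moreover one of $A$, $B$ is GSTP and the other is nonsingular (and GTP), then $AB$ is GSTP with respect to $\{K_1,\ldots,K_n\}$. In particular, if $A$ is GTP (respectively, GSTP) with respect to $\{K_1,\ldots,K_n\}$, then $A^m$ is GTP (respectively, GSTP) with respect to the same structure for every natural number $m$.
   Context: A proper cone is a closed convex cone that is pointed and solid. $\wedge^j\mathbb{R}^n$ is the $j$th exterior power of $\mathbb{R}^n$ and $\wedge^jA$ the operator with $(\wedge^jA)(x_1\wedge\cdots\wedge x_j)=Ax_1\wedge\cdots\wedge Ax_j$. An operator $C$ is $K$-nonnegative if $CK\subseteq K$, $K$-positive if $C(K\setminus\{0\})\subseteq\operatorname{int}K$. A totally positive structure is a family $\{K_1,\ldots,K_n\}$ with $K_j\subset\wedge^j\mathbb{R}^n$ a proper cone; $A$ is GTP (resp. GSTP) with respect to it if $\wedge^jA$ is $K_j$-nonnegative (resp. $K_j$-positive) for every $j=1,\ldots,n$. *)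

theory Defs
  imports "HOL-Analysis.Analysis"
begin

text \<open>Concrete model of the exterior algebra of R^n, where R^n = real^'n::{finite,linorder}.
  A vector of real^('n::{finite,linorder} set) has one coordinate for every subset I of the index set;
  the j-th exterior power is the subspace of vectors supported on the j-subsets I,
  the coordinate at I being the coefficient of the standard basis vector
  e_{i_1} wedge ... wedge e_{i_j} with i_1 < ... < i_j the elements of I.\<close>

definition ext_space :: "nat \<Rightarrow> (real^('n::{finite,linorder} set)) set" where
  "ext_space j = {x. \<forall>I. card I \<noteq> j \<longrightarrow> x $ I = 0}"

definition det_fun :: "nat \<Rightarrow> (nat \<Rightarrow> nat \<Rightarrow> real) \<Rightarrow> real" where
  "det_fun j M = (\<Sum>p | p permutes {..<j}. of_int (sign p) * (\<Prod>k<j. M k (p k)))"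

text \<open>The operator wedge^j A in the standard basis of wedge^j R^n: the j-th compound matrix,
  whose (I,J) entry is the minor of A with rows I and columns J (both increasingly ordered).\<close>
definition ext_pow :: "nat \<Rightarrow> real^('n::{finite,linorder})^'n::{finite,linorder} \<Rightarrow> real^('n::{finite,linorder} set)^('n::{finite,linorder} set)" where
  "ext_pow j A = (\<chi> I J. if card I = j \<and> card J = j
      then det_fun j (\<lambda>a b. A $ (sorted_list_of_set I ! a) $ (sorted_list_of_set J ! b))
      else 0)"

definition proper_cone_in :: "'a::real_normed_vector set \<Rightarrow> 'a set \<Rightarrow> bool" where
  "proper_cone_in V K \<longleftrightarrow> K \<subseteq> V \<and> closed K \<and> convex K \<and> cone K \<and>
     K \<inter> uminus ` K = {0} \<and> (top_of_set V) interior_of K \<noteq> {}"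

definition K_nonneg :: "'a::real_normed_vector set \<Rightarrow> 'a set \<Rightarrow> ('a \<Rightarrow> 'a) \<Rightarrow> bool" where
  "K_nonneg V K C \<longleftrightarrow> C ` K \<subseteq> K"

definition K_pos :: "'a::real_normed_vector set \<Rightarrow> 'a set \<Rightarrow> ('a \<Rightarrow> 'a) \<Rightarrow> bool" where
  "K_pos V K C \<longleftrightarrow> C ` (K - {0}) \<subseteq> (top_of_set V) interior_of K"

definition tp_structure :: "(nat \<Rightarrow> (real^('n::{finite,linorder} set)) set) \<Rightarrow> bool" where
  "tp_structure K \<longleftrightarrow> (\<forall>j\<in>{1..CARD('n::{finite,linorder})}. proper_cone_in (ext_space j :: (real^('n::{finite,linorder} set)) set) (K j))"

definition GTP :: "(nat \<Rightarrow> (real^('n::{finite,linorder} set)) set) \<Rightarrow> real^'n::{finite,linorder}^'n::{finite,linorder} \<Rightarrow> bool" where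
  "GTP K A \<longleftrightarrow> (\<forall>j\<in>{1..CARD('n::{finite,linorder})}. K_nonneg (ext_space j) (K j) (\<lambda>x. ext_pow j A *v x))"

definition GSTP :: "(nat \<Rightarrow> (real^('n::{finite,linorder} set)) set) \<Rightarrow> real^'n::{finite,linorder}^'n::{finite,linorder} \<Rightarrow> bool" where
  "GSTP K A \<longleftrightarrow> (\<forall>j\<in>{1..CARD('n::{finite,linorder})}. K_pos (ext_space j) (K j) (\<lambda>x. ext_pow j A *v x))"

definition mat_pow :: "real^'n::{finite,linorder}^'n::{finite,linorder} \<Rightarrow> nat \<Rightarrow> real^'n::{finite,linorder}^'n::{finite,linorder}" where
  "mat_pow A m = (((**) A) ^^ m) (mat 1)"

end

theory Submission
  imports Defs
begin

lemma sl_facts: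
  fixes S :: "'k::{finite,linorder} set"
  shows "set (sorted_list_of_set S) = S" "distinct (sorted_list_of_set S)"
    "length (sorted_list_of_set S) = card S"
  by auto

lemma det_fun_cong:
  assumes "\<And>a b. a < j \<Longrightarrow> b < j \<Longrightarrow> M a b = N a b"
  shows "det_fun j M = det_fun j N"
  unfolding det_fun_def
proof (rule sum.cong[OF refl])
  fix p assume "p \<in> {p. p permutes {..<j}}"
  then have p: "p permutes {..<j}" by simp
  show "of_int (sign p) * (\<Prod>k<j. M k (p k)) = of_int (sign p) * (\<Prod>k<j. N k (p k))"
    using assms permutes_in_image[OF p] by (intro arg_cong2[where f="(*)"] prod.cong) auto
qed

lemma det_fun_zero_row:
  assumes "a < j" "\<And>b. b < j \<Longrightarrow> M a b = 0"
  shows "det_fun j M = 0"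
  unfolding det_fun_def
proof (rule sum.neutral, safe)
  fix p assume p: "p permutes {..<j}"
  have "(\<Prod>k<j. M k (p k)) = 0"
    using assms permutes_in_image[OF p] by (intro prod_zero) auto
  then show "of_int (sign p) * (\<Prod>k<j. M k (p k)) = 0" by simp
qed

lemma det_fun_permute_rows:
  assumes s: "s permutes {..<j}"
  shows "det_fun j (\<lambda>a b. M (s a) b) = of_int (sign s) * det_fun j M"
proof -
  have "det_fun j (\<lambda>a b. M (s a) b) = (\<Sum>p | p permutes {..<j}. of_int (sign p) * (\<Prod>k<j. M (s k) (p k)))"
    unfolding det_fun_def ..
  also have "\<dots> = (\<Sum>p | p permutes {..<j}. of_int (sign (p \<circ> s)) * (\<Prod>k<j. M (s k) ((p \<circ> s) k)))"
    by (rule sum_permutations_compose_right[OF s])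
  also have "\<dots> = (\<Sum>p | p permutes {..<j}. of_int (sign s) * (of_int (sign p) * (\<Prod>k<j. M k (p k))))"
  proof (rule sum.cong[OF refl])
    fix p assume "p \<in> {p. p permutes {..<j}}"
    then have p: "p permutes {..<j}" by simp
    have "sign (p \<circ> s) = sign p * sign s"
      by (rule sign_compose) (use p s permutation_permutes in auto)
    moreover have "(\<Prod>k<j. M (s k) ((p \<circ> s) k)) = (\<Prod>k<j. M k (p k))"
      using prod.permute[OF s, of "\<lambda>k. M k (p k)"] by (simp add: o_def)
    ultimately show "of_int (sign (p \<circ> s)) * (\<Prod>k<j. M (s k) ((p \<circ> s) k)) =
        of_int (sign s) * (of_int (sign p) * (\<Prod>k<j. M k (p k)))" by simp
  qed
  also have "\<dots> = of_int (sign s) * det_fun j M"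
    unfolding det_fun_def by (simp add: sum_distrib_left)
  finally show ?thesis .
qed

lemma det_fun_identical_rows:
  assumes a: "a1 < j" "a2 < j" "a1 \<noteq> a2" and eq: "\<And>b. M a1 b = M a2 b"
  shows "det_fun j M = 0"
proof -
  let ?t = "Transposition.transpose a1 a2"
  have t: "?t permutes {..<j}" using a by (intro permutes_swap_id) auto
  have Mt: "M (?t k) = M k" for k using eq by (auto simp: Transposition.transpose_def)
  have "det_fun j M = det_fun j (\<lambda>a b. M (?t a) b)" by (simp add: Mt)
  also have "\<dots> = - det_fun j M"
    using det_fun_permute_rows[OF t, of M] a by (simp add: sign_swap_id)
  finally show ?thesis by simp
qed

lemma det_fun_id: "det_fun j (\<lambda>a b. if a = b then 1 else 0) = 1"
proof -
  have "det_fun j (\<lambda>a b. if a = b then 1 else 0) =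
      (\<Sum>p | p permutes {..<j}. if p = id then 1 else 0)"
    unfolding det_fun_def
  proof (rule sum.cong[OF refl])
    fix p assume "p \<in> {p. p permutes {..<j}}"
    then have p: "p permutes {..<j}" by simp
    show "of_int (sign p) * (\<Prod>k<j. if k = p k then 1 else 0) = (if p = id then 1 else (0::real))"
    proof (cases "p = id")
      case True then show ?thesis by (simp add: sign_id)
    next
      case False
      then obtain k where "p k \<noteq> k" by (auto simp: fun_eq_iff)
      then have "k < j" using p by (meson lessThan_iff permutes_def)
      then have "(\<Prod>k<j. if k = p k then 1 else 0) = (0::real)"
        using \<open>p k \<noteq> k\<close> by (intro prod_zero) (auto intro!: bexI[of _ k])
      then show ?thesis using False by simp
    qed
  qed
  also have "\<dots> = 1" using permutes_id[of "{..<j}"] finite_permutations[of "{..<j}"]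
    by (simp add: sum.delta')
  finally show ?thesis .
qed

lemma cauchy_binet_gen:
  fixes M :: "nat \<Rightarrow> 'k::{finite,linorder} \<Rightarrow> real" and N :: "'k \<Rightarrow> nat \<Rightarrow> real"
  shows "det_fun j (\<lambda>a b. \<Sum>k\<in>UNIV. M a k * N k b) =
    (\<Sum>S\<in>{S::'k set. card S = j}. det_fun j (\<lambda>a b. M a (sorted_list_of_set S ! b)) *
        det_fun j (\<lambda>a b. N (sorted_list_of_set S ! a) b))"
proof -
  define F where "F = PiE {..<j} (\<lambda>_. UNIV::'k set)"
  define g where "g f = (\<Prod>a<j. M a (f a)) * det_fun j (\<lambda>a b. N (f a) b)" for f
  define Inj where "Inj = {f\<in>F. inj_on f {..<j}}"
  define perms where "perms = {p. p permutes {..<j}}"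
  define Sets where "Sets = {S::'k set. card S = j}"
  define \<Phi> where "\<Phi> = (\<lambda>(S::'k set,s::nat\<Rightarrow>nat). restrict (\<lambda>a. sorted_list_of_set S ! s a) {..<j})"
  have finF: "finite F" unfolding F_def by (intro finite_PiE) auto
  have s1: "det_fun j (\<lambda>a b. \<Sum>k\<in>UNIV. M a k * N k b) = (\<Sum>f\<in>F. g f)"
  proof -
    have "det_fun j (\<lambda>a b. \<Sum>k\<in>UNIV. M a k * N k b) =
      (\<Sum>p\<in>perms. of_int (sign p) * (\<Sum>f\<in>F. \<Prod>a<j. M a (f a) * N (f a) (p a)))"
      unfolding det_fun_def perms_def F_def
      by (intro sum.cong refl arg_cong2[where f="(*)"] prod_sum_PiE) auto
    also have "\<dots> = (\<Sum>f\<in>F. \<Sum>p\<in>perms. (\<Prod>a<j. M a (f a)) * (of_int (sign p) * (\<Prod>a<j. N (f a) (p a))))"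
      by (subst sum.swap) (simp add: sum_distrib_left prod.distrib mult_ac)
    also have "\<dots> = (\<Sum>f\<in>F. g f)"
      unfolding g_def det_fun_def perms_def by (simp add: sum_distrib_left)
    finally show ?thesis .
  qed
  have s2: "(\<Sum>f\<in>F. g f) = (\<Sum>f\<in>Inj. g f)"
  proof (rule sum.mono_neutral_right[OF finF])
    show "Inj \<subseteq> F" unfolding Inj_def by auto
    show "\<forall>f\<in>F - Inj. g f = 0"
    proof
      fix f assume "f \<in> F - Inj"
      then have "\<not> inj_on f {..<j}" unfolding Inj_def by auto
      then obtain a1 a2 where "a1 < j" "a2 < j" "a1 \<noteq> a2" "f a1 = f a2"
        unfolding inj_on_def by auto
      then have "det_fun j (\<lambda>a b. N (f a) b) = 0"
        by (intro det_fun_identical_rows[of a1 j a2]) auto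
      then show "g f = 0" unfolding g_def by simp
    qed
  qed
  have bij: "bij_betw \<Phi> (Sigma Sets (\<lambda>_. perms)) Inj"
  proof (rule bij_betw_imageI)
    show "inj_on \<Phi> (Sigma Sets (\<lambda>_. perms))"
    proof (rule inj_onI, clarify)
      fix S s S' s' assume S: "S \<in> Sets" and s: "s \<in> perms" and S': "S' \<in> Sets" and s': "s' \<in> perms"
        and eq: "\<Phi> (S, s) = \<Phi> (S', s')"
      let ?l = "sorted_list_of_set S" and ?l' = "sorted_list_of_set S'"
      have sp: "s permutes {..<j}" "s' permutes {..<j}" using s s' unfolding perms_def by auto
      have img: "\<Phi> (S, s) ` {..<j} = S" if "S \<in> Sets" "s permutes {..<j}" for S s
      proof -
        have "\<Phi> (S, s) ` {..<j} = (\<lambda>a. sorted_list_of_set S ! a) ` (s ` {..<j})"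
          unfolding \<Phi>_def by (auto simp: image_iff)
        also have "\<dots> = (\<lambda>a. sorted_list_of_set S ! a) ` {..<j}" using permutes_image[OF that(2)] by simp
        also have "\<dots> = S"
        proof -
          have "bij_betw ((!) (sorted_list_of_set S)) {..<j} S"
            by (rule bij_betw_nth) (use that(1) in \<open>auto simp: Sets_def sl_facts\<close>)
          then show ?thesis by (rule bij_betw_imp_surj_on)
        qed
        finally show ?thesis .
      qed
      have SS: "S = S'" using img[OF S sp(1)] img[OF S' sp(2)] eq by simp
      have "s a = s' a" for a
      proof (cases "a < j")
        case True
        have "?l ! s a = ?l ! s' a" using fun_cong[OF eq, of a] True SS unfolding \<Phi>_def by simp
        moreover have "s a < j" "s' a < j" using True permutes_in_image[OF sp(1)] permutes_in_image[OF sp(2)] by auto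
        ultimately show ?thesis using S unfolding Sets_def
          by (simp add: nth_eq_iff_index_eq sl_facts)
      next
        case False
        then show ?thesis using sp by (simp add: permutes_def)
      qed
      then show "S = S' \<and> s = s'" using SS by auto
    qed
  next
    show "\<Phi> ` Sigma Sets (\<lambda>_. perms) = Inj"
    proof
      show "\<Phi> ` Sigma Sets (\<lambda>_. perms) \<subseteq> Inj"
      proof clarify
        fix S s assume S: "S \<in> Sets" and s: "s \<in> perms"
        have sp: "s permutes {..<j}" using s unfolding perms_def by auto
        have len: "length (sorted_list_of_set S) = j" "distinct (sorted_list_of_set S)"
          using S unfolding Sets_def by (auto simp: sl_facts)
        show "\<Phi> (S, s) \<in> Inj" unfolding Inj_def
        proof (intro CollectI conjI)
          show "\<Phi> (S, s) \<in> F" unfolding F_def \<Phi>_def by auto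
          show "inj_on (\<Phi> (S, s)) {..<j}"
          proof (rule inj_onI)
          fix x y assume xy: "x \<in> {..<j}" "y \<in> {..<j}" "\<Phi> (S, s) x = \<Phi> (S, s) y"
          then have "sorted_list_of_set S ! s x = sorted_list_of_set S ! s y" unfolding \<Phi>_def by simp
          moreover have "s x < j" "s y < j" using xy permutes_in_image[OF sp] by auto
          ultimately have "s x = s y" using len by (simp add: nth_eq_iff_index_eq)
          then show "x = y" using permutes_inj[OF sp] by (simp add: inj_eq)
          qed
        qed
      qed
      show "Inj \<subseteq> \<Phi> ` Sigma Sets (\<lambda>_. perms)"
      proof
        fix f assume f: "f \<in> Inj"
        then have fF: "f \<in> F" and fi: "inj_on f {..<j}" unfolding Inj_def by auto
        define S where "S = f ` {..<j}"
        let ?l = "sorted_list_of_set S"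
        have cS: "card S = j" unfolding S_def using card_image[OF fi] by simp
        have bn: "bij_betw ((!) ?l) {..<j} S"
          by (rule bij_betw_nth) (auto simp: sl_facts cS)
        define s where "s a = (if a < j then inv_into {..<j} ((!) ?l) (f a) else a)" for a
        have bf: "bij_betw f {..<j} S" unfolding S_def using fi by (rule inj_on_imp_bij_betw)
        have "bij_betw (inv_into {..<j} ((!) ?l) \<circ> f) {..<j} {..<j}"
          by (rule bij_betw_trans[OF bf bij_betw_inv_into[OF bn]])
        then have "bij_betw s {..<j} {..<j}"
          by (rule bij_betw_cong[THEN iffD1, rotated]) (auto simp: s_def)
        then have sp: "s permutes {..<j}"
          by (rule bij_imp_permutes) (auto simp: s_def)
        have "\<Phi> (S, s) = f"
        proof
          fix a show "\<Phi> (S, s) a = f a"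
          proof (cases "a < j")
            case True
            have "f a \<in> S" unfolding S_def using True by auto
            then have "f a \<in> (!) ?l ` {..<j}" using bn by (simp add: bij_betw_def)
            then show ?thesis unfolding \<Phi>_def s_def using True by (simp add: f_inv_into_f)
          next
            case False
            then show ?thesis using fF unfolding \<Phi>_def F_def by (auto simp: PiE_def extensional_def)
          qed
        qed
        moreover have "(S, s) \<in> Sigma Sets (\<lambda>_. perms)"
          using cS sp unfolding Sets_def perms_def by auto
        ultimately show "f \<in> \<Phi> ` Sigma Sets (\<lambda>_. perms)" by force
      qed
    qed
  qed
  have s3: "(\<Sum>f\<in>Inj. g f) = (\<Sum>x\<in>Sigma Sets (\<lambda>_. perms). g (\<Phi> x))"
    by (rule sum.reindex_bij_betw[OF bij, symmetric])
  have s4: "(\<Sum>x\<in>Sigma Sets (\<lambda>_. perms). g (\<Phi> x)) = (\<Sum>S\<in>Sets. \<Sum>s\<in>perms. g (\<Phi> (S, s)))"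
    by (simp add: sum.cartesian_product split_def)
  have s5: "(\<Sum>s\<in>perms. g (\<Phi> (S, s))) = det_fun j (\<lambda>a b. M a (sorted_list_of_set S ! b)) *
        det_fun j (\<lambda>a b. N (sorted_list_of_set S ! a) b)" for S
  proof -
    let ?l = "sorted_list_of_set S"
    have "g (\<Phi> (S, s)) = (of_int (sign s) * (\<Prod>a<j. M a (?l ! s a))) * det_fun j (\<lambda>a b. N (?l ! a) b)"
      if sp: "s permutes {..<j}" for s
    proof -
      have "g (\<Phi> (S, s)) = (\<Prod>a<j. M a (?l ! s a)) * det_fun j (\<lambda>a b. N (?l ! s a) b)"
        unfolding g_def \<Phi>_def by (intro arg_cong2[where f="(*)"] prod.cong det_fun_cong) auto
      also have "det_fun j (\<lambda>a b. N (?l ! s a) b) = of_int (sign s) * det_fun j (\<lambda>a b. N (?l ! a) b)"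
        by (rule det_fun_permute_rows[OF sp, of "\<lambda>a b. N (?l ! a) b"])
      finally show ?thesis by simp
    qed
    then have "(\<Sum>s\<in>perms. g (\<Phi> (S, s))) =
        (\<Sum>s\<in>perms. (of_int (sign s) * (\<Prod>a<j. M a (?l ! s a))) * det_fun j (\<lambda>a b. N (?l ! a) b))"
      unfolding perms_def by (intro sum.cong) auto
    also have "\<dots> = det_fun j (\<lambda>a b. M a (?l ! b)) * det_fun j (\<lambda>a b. N (?l ! a) b)"
      unfolding det_fun_def perms_def by (simp add: sum_distrib_right)
    finally show ?thesis .
  qed
  show ?thesis using s1 s2 s3 s4 s5 unfolding Sets_def by simp
qed


lemma ext_pow_mult:
  fixes A B :: "real^'n::{finite,linorder}^'n::{finite,linorder}"
  shows "ext_pow j (A ** B) = ext_pow j A ** ext_pow j B"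
proof -
  have "ext_pow j (A ** B) $ I $ J = (ext_pow j A ** ext_pow j B) $ I $ J" for I J
  proof (cases "card I = j \<and> card J = j")
    case True
    let ?lI = "sorted_list_of_set I" and ?lJ = "sorted_list_of_set J"
    have "(ext_pow j A ** ext_pow j B) $ I $ J = (\<Sum>S\<in>UNIV. ext_pow j A $ I $ S * ext_pow j B $ S $ J)"
      by (simp add: matrix_matrix_mult_def)
    also have "\<dots> = (\<Sum>S\<in>UNIV. if card S = j then det_fun j (\<lambda>a b. A $ (?lI ! a) $ (sorted_list_of_set S ! b)) *
        det_fun j (\<lambda>a b. B $ (sorted_list_of_set S ! a) $ (?lJ ! b)) else 0)"
      using True by (intro sum.cong) (auto simp: ext_pow_def)
    also have "\<dots> = (\<Sum>S\<in>{S. card S = j}. det_fun j (\<lambda>a b. A $ (?lI ! a) $ (sorted_list_of_set S ! b)) *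
        det_fun j (\<lambda>a b. B $ (sorted_list_of_set S ! a) $ (?lJ ! b)))"
      by (subst sum.inter_filter[symmetric]) auto
    also have "\<dots> = det_fun j (\<lambda>a b. \<Sum>k\<in>UNIV. A $ (?lI ! a) $ k * B $ k $ (?lJ ! b))"
      by (rule cauchy_binet_gen[where M="\<lambda>a k. A $ (?lI ! a) $ k" and N="\<lambda>k b. B $ k $ (?lJ ! b)", symmetric])
    also have "\<dots> = ext_pow j (A ** B) $ I $ J"
      using True by (simp add: ext_pow_def matrix_matrix_mult_def)
    finally show ?thesis by simp
  next
    case False
    then show ?thesis by (auto simp: ext_pow_def matrix_matrix_mult_def)
  qed
  then show ?thesis by (simp add: vec_eq_iff)
qed

lemma ext_pow_one_entry:
  "ext_pow j (mat 1 :: real^'n::{finite,linorder}^'n::{finite,linorder}) $ I $ J = (if card I = j \<and> J = I then 1 else 0)"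
proof (cases "card I = j \<and> card J = j")
  case True
  let ?lI = "sorted_list_of_set I" and ?lJ = "sorted_list_of_set J"
  have LI: "length ?lI = j" "distinct ?lI" "set ?lI = I" using True by (auto simp: sl_facts)
  have LJ: "length ?lJ = j" "distinct ?lJ" "set ?lJ = J" using True by (auto simp: sl_facts)
  show ?thesis
  proof (cases "J = I")
    case True': True
    have "det_fun j (\<lambda>a b. (mat 1 :: real^'n::{finite,linorder}^'n::{finite,linorder}) $ (?lI ! a) $ (?lI ! b)) = det_fun j (\<lambda>a b. if a = b then 1 else 0)"
      using LI by (intro det_fun_cong) (simp add: mat_def nth_eq_iff_index_eq)
    then show ?thesis using True True' by (simp add: ext_pow_def det_fun_id)
  next
    case False
    have "\<not> I \<subseteq> J"
    proof
      assume "I \<subseteq> J"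
      then have "I = J" using True by (intro card_subset_eq) auto
      then show False using False by simp
    qed
    then obtain i where i: "i \<in> I" "i \<notin> J" by auto
    then obtain a where a: "a < j" "?lI ! a = i" using LI by (metis in_set_conv_nth)
    have "det_fun j (\<lambda>a b. (mat 1 :: real^'n::{finite,linorder}^'n::{finite,linorder}) $ (?lI ! a) $ (?lJ ! b)) = 0"
    proof (rule det_fun_zero_row[OF a(1)])
      fix b assume "b < j"
      then have "?lJ ! b \<in> J" using LJ nth_mem by metis
      then show "(mat 1 :: real^'n::{finite,linorder}^'n::{finite,linorder}) $ (?lI ! a) $ (?lJ ! b) = 0" using a i by (auto simp: mat_def)
    qed
    then show ?thesis using True False by (simp add: ext_pow_def)
  qed
next
  case False
  then show ?thesis by (auto simp: ext_pow_def)
qed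

lemma ext_pow_one_apply:
  assumes "x \<in> ext_space j"
  shows "ext_pow j (mat 1 :: real^'n::{finite,linorder}^'n::{finite,linorder}) *v x = x"
proof -
  have "(ext_pow j (mat 1 :: real^'n::{finite,linorder}^'n::{finite,linorder}) *v x) $ I = x $ I" for I
  proof (cases "card I = j")
    case True
    have "(\<Sum>J\<in>UNIV. (if card I = j \<and> J = I then 1 else 0) * x $ J) = (\<Sum>J\<in>UNIV. if J = I then x $ J else 0)"
      using True by (intro sum.cong) auto
    also have "\<dots> = x $ I" by (simp add: sum.delta')
    finally show ?thesis by (simp add: matrix_vector_mult_def ext_pow_one_entry)
  next
    case False
    then show ?thesis using assms by (simp add: matrix_vector_mult_def ext_pow_one_entry ext_space_def)
  qed
  then show ?thesis by (simp add: vec_eq_iff)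
qed

lemma ext_pow_space: "ext_pow j (X :: real^'n::{finite,linorder}^'n::{finite,linorder}) *v x \<in> ext_space j"
  by (simp add: ext_space_def matrix_vector_mult_def ext_pow_def)

lemma ext_pow_mult_apply:
  fixes A B :: "real^'n::{finite,linorder}^'n::{finite,linorder}"
  shows "ext_pow j (A ** B) *v x = ext_pow j A *v (ext_pow j B *v x)"
  by (simp add: ext_pow_mult matrix_vector_mul_assoc)

lemma ext_pow_inv:
  fixes A :: "real^'n::{finite,linorder}^'n::{finite,linorder}"
  assumes "invertible A"
  shows "\<exists>A'. (\<forall>x\<in>ext_space j. ext_pow j A' *v (ext_pow j A *v x) = x) \<and>
    (\<forall>x\<in>ext_space j. ext_pow j A *v (ext_pow j A' *v x) = x)"
proof -
  obtain A' where A': "A ** A' = mat 1" "A' ** A = mat 1" using assms unfolding invertible_def by auto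
  show ?thesis
    by (rule exI[of _ A']) (simp add: ext_pow_mult_apply[symmetric] A' ext_pow_one_apply)
qed

lemma pc_zero: "proper_cone_in V Kc \<Longrightarrow> 0 \<in> Kc"
  unfolding proper_cone_in_def by auto

lemma pc_sub: "proper_cone_in V Kc \<Longrightarrow> Kc \<subseteq> V"
  unfolding proper_cone_in_def by auto

lemma ext_space_nonzero:
  assumes "j \<le> CARD('n::{finite,linorder})"
  shows "\<exists>e\<in>(ext_space j :: (real^('n set)) set). e \<noteq> 0"
proof -
  obtain I0 :: "'n set" where "card I0 = j"
    using obtain_subset_with_card_n[of j "UNIV :: 'n set"] assms by auto
  then show ?thesis
    by (intro bexI[of _ "\<chi> I. if I = I0 then 1 else 0"]) (auto simp: ext_space_def vec_eq_iff)
qed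

lemma zero_notin_interior:
  fixes Kc :: "(real^('n::{finite,linorder} set)) set"
  assumes pc: "proper_cone_in (ext_space j) Kc" and j: "j \<le> CARD('n)"
  shows "0 \<notin> top_of_set (ext_space j) interior_of Kc"
proof
  assume "0 \<in> top_of_set (ext_space j) interior_of Kc"
  then obtain U where U: "openin (top_of_set (ext_space j)) U" "0 \<in> U" "U \<subseteq> Kc"
    unfolding interior_of_def by auto
  then obtain T where T: "open T" "U = ext_space j \<inter> T" by (auto simp: openin_open)
  then obtain \<epsilon> where e: "\<epsilon> > 0" "ball 0 \<epsilon> \<subseteq> T" using U(2) open_contains_ball by blast
  obtain e :: "real^('n set)" where eV: "e \<in> ext_space j" "e \<noteq> 0" using ext_space_nonzero[OF j] by auto
  define v where "v = (\<epsilon> / (2 * norm e)) *\<^sub>R e"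
  have nv: "norm v = \<epsilon> / 2" using e eV by (simp add: v_def)
  have vV: "v \<in> ext_space j" "- v \<in> ext_space j" using eV by (auto simp: ext_space_def v_def)
  have "v \<in> ball 0 \<epsilon>" "- v \<in> ball 0 \<epsilon>" using nv e by auto
  then have "v \<in> T" "- v \<in> T" using e(2) by auto
  then have "v \<in> U" "- v \<in> U" using vV T(2) by blast+
  then have vK: "v \<in> Kc" "- v \<in> Kc" using U(3) by blast+
  have "v \<in> uminus ` Kc" by (rule rev_image_eqI[OF vK(2)]) simp
  then have "v \<in> Kc \<inter> uminus ` Kc" using vK(1) by blast
  then have "v = 0" using pc unfolding proper_cone_in_def by auto
  then show False using nv e by simp
qed

lemma interior_preserve:
  fixes C D :: "real^('n::{finite,linorder} set)^('n set)"
  assumes nonneg: "\<And>x. x \<in> Kc \<Longrightarrow> C *v x \<in> Kc"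
    and inv: "\<And>x. x \<in> V \<Longrightarrow> D *v (C *v x) = x" "\<And>x. x \<in> V \<Longrightarrow> C *v (D *v x) = x"
    and sp: "\<And>x. C *v x \<in> V" "\<And>x. D *v x \<in> V"
    and y: "y \<in> top_of_set V interior_of Kc"
  shows "C *v y \<in> top_of_set V interior_of Kc"
proof -
  from y obtain U where U: "openin (top_of_set V) U" "y \<in> U" "U \<subseteq> Kc"
    unfolding interior_of_def by auto
  then obtain T where T: "open T" "U = V \<inter> T" by (auto simp: openin_open)
  define U' where "U' = V \<inter> ((\<lambda>z. D *v z) -` T)"
  have "open ((\<lambda>z. D *v z) -` T)"
    using T(1) by (intro continuous_open_vimage) (auto intro: linear_continuous_at)
  then have oU': "openin (top_of_set V) U'" unfolding U'_def by (auto simp: openin_open)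
  have yV: "y \<in> V" "y \<in> T" using U T by auto
  have "C *v y \<in> U'" unfolding U'_def using sp(1) inv(1)[OF yV(1)] yV by auto
  moreover have "U' \<subseteq> Kc"
  proof
    fix z assume z: "z \<in> U'"
    then have "D *v z \<in> U" using sp(2) T unfolding U'_def by auto
    then have "C *v (D *v z) \<in> Kc" using U nonneg by auto
    then show "z \<in> Kc" using inv(2) z unfolding U'_def by auto
  qed
  ultimately show ?thesis using oU' unfolding interior_of_def by auto
qed


lemma step_nonneg:
  fixes A B :: "real^'n::{finite,linorder}^'n::{finite,linorder}"
  assumes "K_nonneg V Kc (\<lambda>x. ext_pow j A *v x)" "K_nonneg V Kc (\<lambda>x. ext_pow j B *v x)"
  shows "K_nonneg V Kc (\<lambda>x. ext_pow j (A ** B) *v x)"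
  using assms unfolding K_nonneg_def by (auto simp: ext_pow_mult_apply image_subset_iff)

lemma pos_nonneg:
  fixes X :: "real^('n::{finite,linorder} set)^('n set)"
  assumes pc: "proper_cone_in V Kc" and p: "K_pos V Kc (\<lambda>x. X *v x)"
  shows "K_nonneg V Kc (\<lambda>x. X *v x)"
  unfolding K_nonneg_def
proof clarify
  fix x assume x: "x \<in> Kc"
  show "X *v x \<in> Kc"
  proof (cases "x = 0")
    case True then show ?thesis using pc_zero[OF pc] by simp
  next
    case False
    then have "X *v x \<in> top_of_set V interior_of Kc" using p x unfolding K_pos_def by auto
    then show ?thesis by (rule subsetD[OF interior_of_subset])
  qed
qed

lemma step_pos_pos:
  fixes A B :: "real^'n::{finite,linorder}^'n::{finite,linorder}"
  assumes pc: "proper_cone_in (ext_space j) Kc" and j: "j \<le> CARD('n)"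
    and pA: "K_pos (ext_space j) Kc (\<lambda>x. ext_pow j A *v x)"
    and pB: "K_pos (ext_space j) Kc (\<lambda>x. ext_pow j B *v x)"
  shows "K_pos (ext_space j) Kc (\<lambda>x. ext_pow j (A ** B) *v x)"
  unfolding K_pos_def image_subset_iff
proof (intro ballI)
  fix x assume x0: "x \<in> Kc - {0}"
  then have x: "x \<in> Kc" "x \<noteq> 0" by auto
  let ?y = "ext_pow j B *v x"
  have yi: "?y \<in> top_of_set (ext_space j) interior_of Kc" using pB x unfolding K_pos_def by auto
  then have "?y \<noteq> 0" using zero_notin_interior[OF pc j] by auto
  moreover have "?y \<in> Kc" using yi by (rule subsetD[OF interior_of_subset])
  ultimately have "ext_pow j A *v ?y \<in> top_of_set (ext_space j) interior_of Kc"
    using pA unfolding K_pos_def by auto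
  then show "ext_pow j (A ** B) *v x \<in> top_of_set (ext_space j) interior_of Kc"
    by (simp add: ext_pow_mult_apply)
qed

lemma step_pos_inv:
  fixes A B :: "real^'n::{finite,linorder}^'n::{finite,linorder}"
  assumes pc: "proper_cone_in (ext_space j) Kc"
    and pA: "K_pos (ext_space j) Kc (\<lambda>x. ext_pow j A *v x)"
    and nB: "K_nonneg (ext_space j) Kc (\<lambda>x. ext_pow j B *v x)"
    and iB: "invertible B"
  shows "K_pos (ext_space j) Kc (\<lambda>x. ext_pow j (A ** B) *v x)"
  unfolding K_pos_def image_subset_iff
proof (intro ballI)
  obtain B' where B'0: "\<forall>x\<in>ext_space j. ext_pow j B' *v (ext_pow j B *v x) = x"
    using ext_pow_inv[OF iB, where j=j] by blast
  have B': "\<And>x. x \<in> ext_space j \<Longrightarrow> ext_pow j B' *v (ext_pow j B *v x) = x" using B'0 by blast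
  fix x assume x0: "x \<in> Kc - {0}"
  then have x: "x \<in> Kc" "x \<noteq> 0" by auto
  let ?y = "ext_pow j B *v x"
  have "?y \<in> Kc" using nB x unfolding K_nonneg_def by auto
  moreover have "?y \<noteq> 0"
  proof
    assume "?y = 0"
    then have "x = ext_pow j B' *v 0" using B'[of x] x pc_sub[OF pc] by auto
    then show False using x by simp
  qed
  ultimately have "ext_pow j A *v ?y \<in> top_of_set (ext_space j) interior_of Kc"
    using pA unfolding K_pos_def by auto
  then show "ext_pow j (A ** B) *v x \<in> top_of_set (ext_space j) interior_of Kc"
    by (simp add: ext_pow_mult_apply)
qed

lemma step_inv_pos:
  fixes A B :: "real^'n::{finite,linorder}^'n::{finite,linorder}"
  assumes nA: "K_nonneg (ext_space j) Kc (\<lambda>x. ext_pow j A *v x)"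
    and iA: "invertible A"
    and pB: "K_pos (ext_space j) Kc (\<lambda>x. ext_pow j B *v x)"
  shows "K_pos (ext_space j) Kc (\<lambda>x. ext_pow j (A ** B) *v x)"
  unfolding K_pos_def image_subset_iff
proof (intro ballI)
  obtain A' where A'0: "\<forall>x\<in>ext_space j. ext_pow j A' *v (ext_pow j A *v x) = x"
      "\<forall>x\<in>ext_space j. ext_pow j A *v (ext_pow j A' *v x) = x"
    using ext_pow_inv[OF iA, where j=j] by blast
  have A': "\<And>x. x \<in> ext_space j \<Longrightarrow> ext_pow j A' *v (ext_pow j A *v x) = x"
    "\<And>x. x \<in> ext_space j \<Longrightarrow> ext_pow j A *v (ext_pow j A' *v x) = x" using A'0 by blast+
  fix x assume x0: "x \<in> Kc - {0}"
  then have x: "x \<in> Kc" "x \<noteq> 0" by auto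
  let ?y = "ext_pow j B *v x"
  have yi: "?y \<in> top_of_set (ext_space j) interior_of Kc" using pB x unfolding K_pos_def by auto
  have "ext_pow j A *v ?y \<in> top_of_set (ext_space j) interior_of Kc"
  proof (rule interior_preserve[where D="ext_pow j A'"])
    show "\<And>x. x \<in> Kc \<Longrightarrow> ext_pow j A *v x \<in> Kc" using nA unfolding K_nonneg_def by auto
    show "\<And>x. x \<in> ext_space j \<Longrightarrow> ext_pow j A' *v (ext_pow j A *v x) = x" by (rule A'(1))
    show "\<And>x. x \<in> ext_space j \<Longrightarrow> ext_pow j A *v (ext_pow j A' *v x) = x" by (rule A'(2))
    show "\<And>x. ext_pow j A *v x \<in> ext_space j" by (rule ext_pow_space)
    show "\<And>x. ext_pow j A' *v x \<in> ext_space j" by (rule ext_pow_space)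
    show "?y \<in> top_of_set (ext_space j) interior_of Kc" by (rule yi)
  qed
  then show "ext_pow j (A ** B) *v x \<in> top_of_set (ext_space j) interior_of Kc"
    by (simp add: ext_pow_mult_apply)
qed

lemma mat_pow_0: "mat_pow A 0 = mat 1" by (simp add: mat_pow_def)
lemma mat_pow_Suc: "mat_pow A (Suc m) = A ** mat_pow A m" by (simp add: mat_pow_def)

theorem proposition15:
  fixes K :: "nat \<Rightarrow> (real^('n::{finite,linorder} set)) set"
    and A B :: "real^'n::{finite,linorder}^'n::{finite,linorder}"
  assumes "tp_structure K"
  shows "(GTP K A \<and> GTP K B \<longrightarrow> GTP K (A ** B))
    \<and> (GTP K A \<and> GTP K B \<and> ((GSTP K A \<and> invertible B) \<or> (invertible A \<and> GSTP K B))
         \<longrightarrow> GSTP K (A ** B))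
    \<and> (GTP K A \<longrightarrow> (\<forall>m. GTP K (mat_pow A m)))
    \<and> (GSTP K A \<longrightarrow> (\<forall>m\<ge>1. GSTP K (mat_pow A m)))"
proof -
  have pc: "proper_cone_in (ext_space j) (K j)" if "j \<in> {1..CARD('n)}" for j
    using assms that unfolding tp_structure_def by auto
  have c1: "GTP K X \<Longrightarrow> GTP K Y \<Longrightarrow> GTP K (X ** Y)" for X Y :: "real^'n::{finite,linorder}^'n::{finite,linorder}"
    unfolding GTP_def by (auto intro: step_nonneg)
  have c2: "GSTP K (A ** B)" if "GTP K A" "GTP K B" "(GSTP K A \<and> invertible B) \<or> (invertible A \<and> GSTP K B)"
    using that(3)
  proof
    assume h: "GSTP K A \<and> invertible B"
    show ?thesis unfolding GSTP_def
    proof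
      fix j assume j: "j \<in> {1..CARD('n)}"
      show "K_pos (ext_space j) (K j) (\<lambda>x. ext_pow j (A ** B) *v x)"
      proof (rule step_pos_inv[OF pc[OF j]])
        show "K_pos (ext_space j) (K j) (\<lambda>x. ext_pow j A *v x)" using h j unfolding GSTP_def by auto
        show "K_nonneg (ext_space j) (K j) (\<lambda>x. ext_pow j B *v x)" using that(2) j unfolding GTP_def by auto
        show "invertible B" using h by simp
      qed
    qed
  next
    assume h: "invertible A \<and> GSTP K B"
    show ?thesis unfolding GSTP_def
    proof
      fix j assume j: "j \<in> {1..CARD('n)}"
      show "K_pos (ext_space j) (K j) (\<lambda>x. ext_pow j (A ** B) *v x)"
      proof (rule step_inv_pos)
        show "K_pos (ext_space j) (K j) (\<lambda>x. ext_pow j B *v x)" using h j unfolding GSTP_def by auto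
        show "K_nonneg (ext_space j) (K j) (\<lambda>x. ext_pow j A *v x)" using that(1) j unfolding GTP_def by auto
        show "invertible A" using h by simp
      qed
    qed
  qed
  have c3: "GTP K (mat_pow A m)" if "GTP K A" for m
  proof (induction m)
    case 0
    show ?case unfolding GTP_def K_nonneg_def mat_pow_0
    proof
      fix j assume j: "j \<in> {1..CARD('n)}"
      show "(\<lambda>x. ext_pow j (mat 1 :: real^'n::{finite,linorder}^'n::{finite,linorder}) *v x) ` K j \<subseteq> K j"
      proof (rule image_subsetI)
        fix x assume x: "x \<in> K j"
        then have "x \<in> ext_space j" using pc_sub[OF pc[OF j]] by auto
        then have "ext_pow j (mat 1 :: real^'n::{finite,linorder}^'n::{finite,linorder}) *v x = x"
          by (rule ext_pow_one_apply)
        then show "ext_pow j (mat 1 :: real^'n::{finite,linorder}^'n::{finite,linorder}) *v x \<in> K j" using x by simp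
      qed
    qed
  next
    case (Suc m)
    then show ?case using c1 that by (simp add: mat_pow_Suc)
  qed
  have c4: "GSTP K (mat_pow A m)" if "GSTP K A" "m \<ge> 1" for m
    using that(2)
  proof (induction m rule: dec_induct)
    case base
    show ?case using that(1) by (simp add: mat_pow_Suc mat_pow_0)
  next
    case (step m)
    show ?case unfolding GSTP_def mat_pow_Suc
    proof
      fix j assume j: "j \<in> {1..CARD('n)}"
      show "K_pos (ext_space j) (K j) (\<lambda>x. ext_pow j (A ** mat_pow A m) *v x)"
      proof (rule step_pos_pos[OF pc[OF j]])
        show "j \<le> CARD('n)" using j by simp
        show "K_pos (ext_space j) (K j) (\<lambda>x. ext_pow j A *v x)" using that(1) j unfolding GSTP_def by auto
        show "K_pos (ext_space j) (K j) (\<lambda>x. ext_pow j (mat_pow A m) *v x)" using step.IH j unfolding GSTP_def by auto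
      qed
    qed
  qed
  show ?thesis
  proof (intro conjI impI allI)
    assume "GTP K A \<and> GTP K B" then show "GTP K (A ** B)" using c1 by auto
  next
    assume "GTP K A \<and> GTP K B \<and> (GSTP K A \<and> invertible B \<or> invertible A \<and> GSTP K B)"
    then show "GSTP K (A ** B)" using c2 by auto
  next
    fix m assume "GTP K A" then show "GTP K (mat_pow A m)" by (rule c3)
  next
    fix m :: nat assume "GSTP K A" "1 \<le> m" then show "GSTP K (mat_pow A m)" by (rule c4)
  qed
qed

end
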